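(* In the conflict-list randomized incremental construction of the Delaunay triangulation of $n$ points in general position with uniformly random insertion order, let $T_k$ denote the work of stage $k$, i.e. $T_k=\sum_{\sigma\in\Delta(v)}\ell(\sigma)$ where $v=p_k$ is the point inserted at stage $k$, $\Delta(v)$ is the set of triangles of the Delaunay triangulation of $\{p_1,\ldots,p_k\}$ incident to $v$, and $\ell(\sigma)$ is the number of points of $P$ lying in $\sigma$. Then $\mathbb{E}[T_k^2]=O(n^2/k)$, and consequently $\sum_{k=1}^n\mathbb{E}[T_k^2]=O(n^2\log n)$.
   Context: General position: no three points collinear and no four points cocircular. The points $p_1,\ldots,p_n$ are the points of $P$ in the order of a uniformly random permutation; $\{p_1,\ldots,p_k\}$ is thus a uniformly random $k$-subset of $P$. *)

theory Defs
  imports "HOL-Analysis.Analysis" "HOL-Combinatorics.Multiset_Permutations"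
begin

type_synonym point = "real \<times> real"

definition general_position :: "point set \<Rightarrow> bool" where
  "general_position P \<longleftrightarrow>
     (\<forall>a\<in>P. \<forall>b\<in>P. \<forall>c\<in>P. a \<noteq> b \<and> a \<noteq> c \<and> b \<noteq> c \<longrightarrow> \<not> collinear {a, b, c}) \<and>
     (\<forall>a\<in>P. \<forall>b\<in>P. \<forall>c\<in>P. \<forall>d\<in>P. card {a, b, c, d} = 4 \<longrightarrow>
         \<not> (\<exists>z r. {a, b, c, d} \<subseteq> sphere z r))"

definition delaunay_triangles :: "point set \<Rightarrow> point set set" where
  "delaunay_triangles S =
     {\<sigma>. \<sigma> \<subseteq> S \<and> card \<sigma> = 3 \<and> \<not> collinear \<sigma> \<and>
          (\<exists>z r. \<sigma> \<subseteq> sphere z r \<and> (\<forall>q\<in>S. r \<le> dist q z))}"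

definition ell :: "point set \<Rightarrow> point set \<Rightarrow> nat" where
  "ell P \<sigma> = card {p \<in> P. p \<in> convex hull \<sigma>}"

text \<open>Work of stage k for insertion order ps (a list p_1, ..., p_n), 1 <= k <= n.\<close>
definition stage_work :: "point set \<Rightarrow> point list \<Rightarrow> nat \<Rightarrow> nat" where
  "stage_work P ps k =
     (\<Sum>\<sigma>\<in>{\<sigma> \<in> delaunay_triangles (set (take k ps)). ps ! (k - 1) \<in> \<sigma>}. ell P \<sigma>)"

definition expected_sq_work :: "point set \<Rightarrow> nat \<Rightarrow> real" where
  "expected_sq_work P k =
     (\<Sum>ps\<in>permutations_of_set P. real (stage_work P ps k) ^ 2) / real (card (permutations_of_set P))"

end

theory Submission
  imports Defs "HOL-Analysis.Harmonic_Numbers"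
begin



definition cross :: "point \<Rightarrow> point \<Rightarrow> real" where
  "cross p q = fst p * snd q - snd p * fst q"

definition cone_at :: "point set \<Rightarrow> point \<Rightarrow> point \<Rightarrow> bool" where
  "cone_at \<sigma> v u \<longleftrightarrow> (\<exists>b c s t. \<sigma> = {v,b,c} \<and> s > 0 \<and> t > 0 \<and> u = s *\<^sub>R (b - v) + t *\<^sub>R (c - v))"

lemma cross_zero_par:
  fixes p q :: point
  assumes "cross p q = 0"
  shows "p = 0 \<or> (\<exists>k. q = k *\<^sub>R p)"
proof -
  obtain p1 p2 q1 q2 where pq: "p = (p1, p2)" "q = (q1, q2)" by (cases p, cases q)
  have c: "p1 * q2 = p2 * q1" using assms unfolding pq cross_def by simp
  show ?thesis
  proof (cases "p1 = 0")
    case True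
    show ?thesis
    proof (cases "p2 = 0")
      case True with \<open>p1 = 0\<close> show ?thesis by (simp add: pq zero_prod_def)
    next
      case False
      with c \<open>p1 = 0\<close> have "q1 = 0" by simp
      then have "q = (q2 / p2) *\<^sub>R p" using False \<open>p1 = 0\<close> by (simp add: pq)
      then show ?thesis by blast
    qed
  next
    case False
    have "q2 = (q1 / p1) * p2" using c False by (simp add: field_simps)
    then have "q = (q1 / p1) *\<^sub>R p" using False by (simp add: pq)
    then show ?thesis by blast
  qed
qed

lemma cross_zero_collinear:
  assumes "cross (b - a) (c - a) = 0"
  shows "collinear {a, b, c}"
proof -
  have "collinear {0, b - a, c - a}"
    using cross_zero_par[OF assms] unfolding collinear_lemma by auto
  then have "collinear {b, a, c}" using collinear_3[of b a c] unfolding NO_MATCH_def by simp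
  moreover have "{a, b, c} = {b, a, c}" by blast
  ultimately show ?thesis by simp
qed

lemma decomp:
  fixes p q u :: point
  assumes "cross p q \<noteq> 0"
  shows "u = (cross u q / cross p q) *\<^sub>R p + (cross p u / cross p q) *\<^sub>R q"
proof -
  obtain p1 p2 q1 q2 u1 u2 where pq: "p = (p1, p2)" "q = (q1, q2)" "u = (u1,u2)"
    by (cases p, cases q, cases u)
  have D: "p1 * q2 - p2 * q1 \<noteq> 0" using assms unfolding pq cross_def by simp
  define D where "D = p1 * q2 - p2 * q1"
  have e1: "(u1*q2-u2*q1)*p1 + (p1*u2-p2*u1)*q1 = u1*D" unfolding D_def by algebra
  have e2: "(u1*q2-u2*q1)*p2 + (p1*u2-p2*u1)*q2 = u2*D" unfolding D_def by algebra
  have f1: "(u1*q2-u2*q1)/D * p1 + (p1*u2-p2*u1)/D * q1 = u1"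
  proof -
    have "(u1*q2-u2*q1)/D * p1 + (p1*u2-p2*u1)/D * q1 = ((u1*q2-u2*q1)*p1 + (p1*u2-p2*u1)*q1)/D"
      by (simp add: add_divide_distrib)
    also have "\<dots> = u1" using e1 D unfolding D_def by simp
    finally show ?thesis .
  qed
  have f2: "(u1*q2-u2*q1)/D * p2 + (p1*u2-p2*u1)/D * q2 = u2"
  proof -
    have "(u1*q2-u2*q1)/D * p2 + (p1*u2-p2*u1)/D * q2 = ((u1*q2-u2*q1)*p2 + (p1*u2-p2*u1)*q2)/D"
      by (simp add: add_divide_distrib)
    also have "\<dots> = u2" using e2 D unfolding D_def by simp
    finally show ?thesis .
  qed
  show ?thesis unfolding pq cross_def using f1 f2 unfolding D_def by simp
qed

lemma cone_cases:
  assumes "u = s *\<^sub>R (b - a) + t *\<^sub>R (c - a)" "s \<noteq> 0" "t \<noteq> 0" "s + t \<noteq> 0"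
  shows "\<exists>v\<in>{a,b,c}. cone_at {a,b,c} v u \<or> cone_at {a,b,c} v (-u)"
proof -
  have ab: "{a,b,c} = {b,a,c}" and ac: "{a,b,c} = {c,a,b}" by auto
  consider "s > 0" "t > 0" | "s < 0" "t < 0" | "s > 0" "t < 0" "s + t > 0" | "s > 0" "t < 0" "s + t < 0"
    | "s < 0" "t > 0" "s + t > 0" | "s < 0" "t > 0" "s + t < 0"
    using assms(2-4) by linarith
  then show ?thesis
  proof cases
    case 1 then show ?thesis using assms(1) unfolding cone_at_def by blast
  next
    case 2
    have "-u = (-s) *\<^sub>R (b - a) + (-t) *\<^sub>R (c - a)" using assms(1) by (simp add: algebra_simps)
    then show ?thesis using 2 unfolding cone_at_def by (metis insertI1 neg_0_less_iff_less)
  next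
    case 3
    have eq: "-u = (s+t) *\<^sub>R (a - b) + (-t) *\<^sub>R (c - b)" using assms(1) by (simp add: algebra_simps)
    have "cone_at {a,b,c} b (-u)" unfolding cone_at_def ab
      apply (rule exI[of _ a], rule exI[of _ c], rule exI[of _ "(s+t)"], rule exI[of _ "(-t)"])
      using 3 eq by simp
    then show ?thesis by blast
  next
    case 4
    have eq: "u = (-s-t) *\<^sub>R (a - c) + s *\<^sub>R (b - c)" using assms(1) by (simp add: algebra_simps)
    have "cone_at {a,b,c} c u" unfolding cone_at_def ac
      apply (rule exI[of _ a], rule exI[of _ b], rule exI[of _ "(-s-t)"], rule exI[of _ "s"])
      using 4 eq by simp
    then show ?thesis by blast
  next
    case 5
    have eq: "-u = (s+t) *\<^sub>R (a - c) + (-s) *\<^sub>R (b - c)" using assms(1) by (simp add: algebra_simps)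
    have "cone_at {a,b,c} c (-u)" unfolding cone_at_def ac
      apply (rule exI[of _ a], rule exI[of _ b], rule exI[of _ "(s+t)"], rule exI[of _ "(-s)"])
      using 5 eq by simp
    then show ?thesis by blast
  next
    case 6
    have eq: "u = (-s-t) *\<^sub>R (a - b) + t *\<^sub>R (c - b)" using assms(1) by (simp add: algebra_simps)
    have "cone_at {a,b,c} b u" unfolding cone_at_def ab
      apply (rule exI[of _ a], rule exI[of _ c], rule exI[of _ "(-s-t)"], rule exI[of _ "t"])
      using 6 eq by simp
    then show ?thesis by blast
  qed
qed

lemma cone_exists:
  assumes nc: "\<not> collinear {a,b,c}"
    and gen: "cross u (c - a) \<noteq> 0" "cross (b - a) u \<noteq> 0" "cross u (c - b) \<noteq> 0"
  shows "\<exists>v\<in>{a,b,c}. cone_at {a,b,c} v u \<or> cone_at {a,b,c} v (-u)"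
proof -
  define D where "D = cross (b - a) (c - a)"
  have D: "D \<noteq> 0" using nc cross_zero_collinear unfolding D_def by blast
  define s where "s = cross u (c - a) / D"
  define t where "t = cross (b - a) u / D"
  have u: "u = s *\<^sub>R (b - a) + t *\<^sub>R (c - a)"
    using decomp[of "b - a" "c - a" u] D unfolding s_def t_def D_def by simp
  have "cross u (c - a) + cross (b - a) u = cross u (c - b)"
    unfolding cross_def by (simp add: algebra_simps)
  then have "s + t = cross u (c - b) / D"
    unfolding s_def t_def by (simp add: add_divide_distrib[symmetric])
  then have st: "s + t \<noteq> 0" using gen(3) D by simp
  have "s \<noteq> 0" "t \<noteq> 0" unfolding s_def t_def using gen D by simp_all
  then show ?thesis using cone_cases[OF u _ _ st] by blast
qed




definition Fd :: "point \<Rightarrow> point \<Rightarrow> point \<Rightarrow> real" where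
  "Fd z1 z2 x = (dist x z2)^2 - (dist x z1)^2"

lemma Fd_affine: "Fd z1 z2 x = 2 * inner x (z1 - z2) + (norm z2)^2 - (norm z1)^2"
  unfolding Fd_def dist_norm power2_norm_eq_inner
  by (simp add: inner_diff_left inner_diff_right inner_commute algebra_simps)

lemma Fd_comb3:
  assumes "\<alpha> + \<beta> + \<gamma> = 1"
  shows "Fd z1 z2 (\<alpha> *\<^sub>R a + \<beta> *\<^sub>R b + \<gamma> *\<^sub>R c) = \<alpha> * Fd z1 z2 a + \<beta> * Fd z1 z2 b + \<gamma> * Fd z1 z2 c"
proof -
  have g: "\<gamma> = 1 - \<alpha> - \<beta>" using assms by simp
  show ?thesis unfolding Fd_affine g
    by (simp add: inner_add_left algebra_simps)
qed

lemma Fd_cone: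
  assumes "u = s *\<^sub>R (b - v) + t *\<^sub>R (c - v)"
  shows "2 * inner u (z1 - z2) = s * (Fd z1 z2 b - Fd z1 z2 v) + t * (Fd z1 z2 c - Fd z1 z2 v)"
  unfolding assms Fd_affine by (simp add: inner_add_left inner_diff_left algebra_simps)

lemma four_cocircular:
  assumes gp: "general_position P" and "\<sigma> \<subseteq> P" "\<tau> \<subseteq> P" "card \<sigma> = 3" "card \<tau> = 3"
    and "\<sigma> \<subseteq> sphere z r" "\<tau> \<subseteq> sphere z r"
  shows "\<sigma> = \<tau>"
proof (rule ccontr)
  assume ne: "\<sigma> \<noteq> \<tau>"
  have fin: "finite \<sigma>" using assms(4) by (metis card.infinite zero_neq_numeral)
  have "\<not> \<tau> \<subseteq> \<sigma>"
  proof
    assume "\<tau> \<subseteq> \<sigma>"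
    then have "\<tau> = \<sigma>" using card_subset_eq[OF fin] assms(4,5) by simp
    with ne show False by simp
  qed
  then obtain d where d: "d \<in> \<tau>" "d \<notin> \<sigma>" by blast
  obtain a b c where abc: "\<sigma> = {a,b,c}" "a \<noteq> b" "b \<noteq> c" "a \<noteq> c"
    using assms(4) card_3_iff by metis
  have "card {a,b,c,d} = 4" using abc d by (auto simp: card_insert_if)
  moreover have "{a,b,c,d} \<subseteq> sphere z r" using abc d assms(6,7) by auto
  moreover have "a \<in> P" "b \<in> P" "c \<in> P" "d \<in> P" using abc d assms(2,3) by auto
  ultimately show False using gp unfolding general_position_def by blast
qed

lemma DT_props:
  assumes "\<sigma> \<in> delaunay_triangles S"
  obtains z r where "\<sigma> \<subseteq> S" "card \<sigma> = 3" "\<not> collinear \<sigma>" "\<sigma> \<subseteq> sphere z r"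
    "\<And>q. q \<in> S \<Longrightarrow> r \<le> dist q z" "r \<ge> 0"
    "\<And>q. q \<in> S \<Longrightarrow> 0 \<le> (dist q z)^2 - r^2"
    "\<And>q. q \<in> \<sigma> \<Longrightarrow> (dist q z)^2 - r^2 = 0"
proof -
  from assms obtain z r where h: "\<sigma> \<subseteq> S" "card \<sigma> = 3" "\<not> collinear \<sigma>" "\<sigma> \<subseteq> sphere z r"
    "\<And>q. q \<in> S \<Longrightarrow> r \<le> dist q z"
    unfolding delaunay_triangles_def by blast
  have "\<sigma> \<noteq> {}" using h(2) by auto
  then obtain x where "x \<in> \<sigma>" by blast
  then have "dist z x = r" using h(4) by auto
  then have r0: "r \<ge> 0" by (metis zero_le_dist)
  have "\<And>q. q \<in> S \<Longrightarrow> 0 \<le> (dist q z)^2 - r^2"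
    using h(5) r0 by (simp add: power_mono)
  moreover have "\<And>q. q \<in> \<sigma> \<Longrightarrow> (dist q z)^2 - r^2 = 0"
    using h(4) by (auto simp: dist_commute)
  ultimately show ?thesis using that h r0 by blast
qed

lemma sphere_from_g:
  assumes "(dist q z)^2 - r^2 = 0" "r \<ge> 0"
  shows "q \<in> sphere z r"
proof -
  have "(dist q z)^2 = r^2" using assms by simp
  then have "dist q z = r" using assms(2) by (simp add: power2_eq_iff_nonneg)
  then show ?thesis by (simp add: dist_commute)
qed

lemma cone_unique:
  assumes gp: "general_position P" and SP: "S \<subseteq> P"
    and s1: "\<sigma> \<in> delaunay_triangles S" and t1: "\<tau> \<in> delaunay_triangles S"
    and cs: "cone_at \<sigma> v u" and ct: "cone_at \<tau> v u"
  shows "\<sigma> = \<tau>"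
proof -
  obtain b c s t where sg: "\<sigma> = {v,b,c}" "s > 0" "t > 0" "u = s *\<^sub>R (b - v) + t *\<^sub>R (c - v)"
    using cs unfolding cone_at_def by blast
  obtain b' c' s' t' where tg: "\<tau> = {v,b',c'}" "s' > 0" "t' > 0" "u = s' *\<^sub>R (b' - v) + t' *\<^sub>R (c' - v)"
    using ct unfolding cone_at_def by blast
  obtain z1 r1 where A: "\<sigma> \<subseteq> S" "card \<sigma> = 3" "\<sigma> \<subseteq> sphere z1 r1" "r1 \<ge> 0"
    "\<And>q. q \<in> S \<Longrightarrow> 0 \<le> (dist q z1)^2 - r1^2"
    "\<And>q. q \<in> \<sigma> \<Longrightarrow> (dist q z1)^2 - r1^2 = 0"
    using DT_props[OF s1] by metis
  obtain z2 r2 where B: "\<tau> \<subseteq> S" "card \<tau> = 3" "\<tau> \<subseteq> sphere z2 r2" "r2 \<ge> 0"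
    "\<And>q. q \<in> S \<Longrightarrow> 0 \<le> (dist q z2)^2 - r2^2"
    "\<And>q. q \<in> \<tau> \<Longrightarrow> (dist q z2)^2 - r2^2 = 0"
    using DT_props[OF t1] by metis
  define g1 where "g1 q = (dist q z1)^2 - r1^2" for q
  define g2 where "g2 q = (dist q z2)^2 - r2^2" for q
  have Fg: "Fd z1 z2 x - Fd z1 z2 y = (g2 x - g1 x) - (g2 y - g1 y)" for x y
    unfolding Fd_def g1_def g2_def by simp
  have z1: "g1 v = 0" "g1 b = 0" "g1 c = 0" using A(6) sg(1) unfolding g1_def by auto
  have z2: "g2 v = 0" "g2 b' = 0" "g2 c' = 0" using B(6) tg(1) unfolding g2_def by auto
  have e1: "2 * inner u (z1 - z2) = s * g2 b + t * g2 c"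
    using Fd_cone[OF sg(4), of z1 z2] Fg[of b v] Fg[of c v] z1 z2 by simp
  have e2: "2 * inner u (z1 - z2) = - (s' * g1 b' + t' * g1 c')"
    using Fd_cone[OF tg(4), of z1 z2] Fg[of b' v] Fg[of c' v] z1 z2 by simp
  have bS: "b \<in> S" "c \<in> S" "b' \<in> S" "c' \<in> S" using A(1) B(1) sg(1) tg(1) by auto
  have "0 \<le> g2 b" "0 \<le> g2 c" using B(5) bS unfolding g2_def by auto
  moreover have "0 \<le> g1 b'" "0 \<le> g1 c'" using A(5) bS unfolding g1_def by auto
  ultimately have p: "s * g2 b \<ge> 0" "t * g2 c \<ge> 0" "s' * g1 b' \<ge> 0" "t' * g1 c' \<ge> 0"
    using sg(2,3) tg(2,3) by simp_all
  then have "s * g2 b = 0" "t * g2 c = 0" using e1 e2 by linarith+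
  then have "g2 b = 0" "g2 c = 0" using sg(2,3) by simp_all
  then have "b \<in> sphere z2 r2" "c \<in> sphere z2 r2"
    using sphere_from_g[of b z2 r2] sphere_from_g[of c z2 r2] B(4) unfolding g2_def by blast+
  moreover have "v \<in> sphere z2 r2" using B(3) tg(1) by auto
  ultimately have "\<sigma> \<subseteq> sphere z2 r2" using sg(1) by auto
  then show ?thesis using four_cocircular[OF gp _ _ A(2) B(2) _ B(3)] A(1) B(1) SP by blast
qed




lemma no_segment:
  assumes gp: "general_position P" and "p \<in> P" "b \<in> P" "c \<in> P" "p \<noteq> b" "p \<noteq> c" "b \<noteq> c"
    and eq: "p = \<beta> *\<^sub>R b + \<gamma> *\<^sub>R c" "\<beta> + \<gamma> = 1"
  shows False
proof -
  have "p - b = \<gamma> *\<^sub>R (c - b)"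
  proof -
    have "p - b = \<beta> *\<^sub>R b + \<gamma> *\<^sub>R c - (\<beta> + \<gamma>) *\<^sub>R b" using eq by simp
    also have "\<dots> = \<gamma> *\<^sub>R (c - b)" by (simp add: algebra_simps)
    finally show ?thesis .
  qed
  then have "collinear {0, c - b, p - b}" unfolding collinear_lemma by blast
  moreover have "{0, c - b, p - b} = {0, p - b, c - b}" by blast
  ultimately have "collinear {p, b, c}" using collinear_3[of p b c] unfolding NO_MATCH_def by simp
  then show False using gp assms(2-7) unfolding general_position_def by blast
qed

lemma interior_pos:
  assumes gp: "general_position P" and "p \<in> P" "{a,b,c} \<subseteq> P" "p \<notin> {a,b,c}"
    "a \<noteq> b" "b \<noteq> c" "a \<noteq> c"
    and eq: "p = \<alpha> *\<^sub>R a + \<beta> *\<^sub>R b + \<gamma> *\<^sub>R c" "\<alpha> + \<beta> + \<gamma> = 1"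
    and nn: "\<alpha> \<ge> 0" "\<beta> \<ge> 0" "\<gamma> \<ge> 0"
  shows "\<alpha> > 0 \<and> \<beta> > 0 \<and> \<gamma> > 0"
proof -
  have "\<alpha> \<noteq> 0"
  proof
    assume "\<alpha> = 0"
    then show False using no_segment[OF gp, of p b c \<beta> \<gamma>] assms by auto
  qed
  moreover have "\<beta> \<noteq> 0"
  proof
    assume "\<beta> = 0"
    then show False using no_segment[OF gp, of p a c \<alpha> \<gamma>] assms by auto
  qed
  moreover have "\<gamma> \<noteq> 0"
  proof
    assume "\<gamma> = 0"
    then show False using no_segment[OF gp, of p a b \<alpha> \<beta>] assms by auto
  qed
  ultimately show ?thesis using nn by auto
qed

lemma interior_unique:
  assumes gp: "general_position P" and SP: "S \<subseteq> P" and pP: "p \<in> P"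
    and s1: "\<sigma> \<in> delaunay_triangles S" and t1: "\<tau> \<in> delaunay_triangles S"
    and ps: "p \<notin> \<sigma>" "p \<in> convex hull \<sigma>" and pt: "p \<notin> \<tau>" "p \<in> convex hull \<tau>"
  shows "\<sigma> = \<tau>"
proof -
  obtain z1 r1 where A: "\<sigma> \<subseteq> S" "card \<sigma> = 3" "\<sigma> \<subseteq> sphere z1 r1" "r1 \<ge> 0"
    "\<And>q. q \<in> S \<Longrightarrow> 0 \<le> (dist q z1)^2 - r1^2"
    "\<And>q. q \<in> \<sigma> \<Longrightarrow> (dist q z1)^2 - r1^2 = 0"
    using DT_props[OF s1] by metis
  obtain z2 r2 where B: "\<tau> \<subseteq> S" "card \<tau> = 3" "\<tau> \<subseteq> sphere z2 r2" "r2 \<ge> 0"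
    "\<And>q. q \<in> S \<Longrightarrow> 0 \<le> (dist q z2)^2 - r2^2"
    "\<And>q. q \<in> \<tau> \<Longrightarrow> (dist q z2)^2 - r2^2 = 0"
    using DT_props[OF t1] by metis
  obtain a b c where abc: "\<sigma> = {a,b,c}" "a \<noteq> b" "b \<noteq> c" "a \<noteq> c"
    using A(2) card_3_iff by metis
  obtain a' b' c' where abc': "\<tau> = {a',b',c'}"
    using B(2) card_3_iff by metis
  obtain \<alpha> \<beta> \<gamma> where co: "p = \<alpha> *\<^sub>R a + \<beta> *\<^sub>R b + \<gamma> *\<^sub>R c" "\<alpha> + \<beta> + \<gamma> = 1"
    "\<alpha> \<ge> 0" "\<beta> \<ge> 0" "\<gamma> \<ge> 0"
    using ps(2) unfolding abc convex_hull_3 by blast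
  obtain \<alpha>' \<beta>' \<gamma>' where co': "p = \<alpha>' *\<^sub>R a' + \<beta>' *\<^sub>R b' + \<gamma>' *\<^sub>R c'" "\<alpha>' + \<beta>' + \<gamma>' = 1"
    "\<alpha>' \<ge> 0" "\<beta>' \<ge> 0" "\<gamma>' \<ge> 0"
    using pt(2) unfolding abc' convex_hull_3 by blast
  have pos: "\<alpha> > 0" "\<beta> > 0" "\<gamma> > 0"
    using interior_pos[OF gp pP _ _ abc(2-4) co] A(1) SP ps(1) abc(1) by auto
  define g1 where "g1 q = (dist q z1)^2 - r1^2" for q
  define g2 where "g2 q = (dist q z2)^2 - r2^2" for q
  have Fg: "Fd z1 z2 x = g2 x - g1 x + (r2^2 - r1^2)" for x
    unfolding Fd_def g1_def g2_def by simp
  have z1: "g1 a = 0" "g1 b = 0" "g1 c = 0" using A(6) abc(1) unfolding g1_def by auto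
  have z2: "g2 a' = 0" "g2 b' = 0" "g2 c' = 0" using B(6) abc' unfolding g2_def by auto
  have e1: "Fd z1 z2 p = \<alpha> * g2 a + \<beta> * g2 b + \<gamma> * g2 c + (r2^2 - r1^2)"
  proof -
    have "Fd z1 z2 p = \<alpha> * Fd z1 z2 a + \<beta> * Fd z1 z2 b + \<gamma> * Fd z1 z2 c"
      using Fd_comb3[OF co(2)] co(1) by simp
    also have "\<dots> = \<alpha> * g2 a + \<beta> * g2 b + \<gamma> * g2 c + (\<alpha> + \<beta> + \<gamma>) * (r2^2 - r1^2)"
      unfolding Fg using z1 by (simp add: algebra_simps)
    finally show ?thesis using co(2) by simp
  qed
  have e2: "Fd z1 z2 p = - (\<alpha>' * g1 a' + \<beta>' * g1 b' + \<gamma>' * g1 c') + (r2^2 - r1^2)"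
  proof -
    have "Fd z1 z2 p = \<alpha>' * Fd z1 z2 a' + \<beta>' * Fd z1 z2 b' + \<gamma>' * Fd z1 z2 c'"
      using Fd_comb3[OF co'(2)] co'(1) by simp
    also have "\<dots> = - (\<alpha>' * g1 a' + \<beta>' * g1 b' + \<gamma>' * g1 c') + (\<alpha>' + \<beta>' + \<gamma>') * (r2^2 - r1^2)"
      unfolding Fg using z2 by (simp add: algebra_simps)
    finally show ?thesis using co'(2) by simp
  qed
  have inS: "a \<in> S" "b \<in> S" "c \<in> S" "a' \<in> S" "b' \<in> S" "c' \<in> S" using A(1) B(1) abc(1) abc' by auto
  have "\<alpha> * g2 a \<ge> 0" "\<beta> * g2 b \<ge> 0" "\<gamma> * g2 c \<ge> 0"
    using B(5) inS pos unfolding g2_def by simp_all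
  moreover have "\<alpha>' * g1 a' \<ge> 0" "\<beta>' * g1 b' \<ge> 0" "\<gamma>' * g1 c' \<ge> 0"
    using A(5) inS co' unfolding g1_def by simp_all
  ultimately have "\<alpha> * g2 a = 0" "\<beta> * g2 b = 0" "\<gamma> * g2 c = 0" using e1 e2 by linarith+
  then have "g2 a = 0" "g2 b = 0" "g2 c = 0" using pos by simp_all
  then have "a \<in> sphere z2 r2" "b \<in> sphere z2 r2" "c \<in> sphere z2 r2"
    using sphere_from_g[of a z2 r2] sphere_from_g[of b z2 r2] sphere_from_g[of c z2 r2] B(4)
    unfolding g2_def by blast+
  then have "\<sigma> \<subseteq> sphere z2 r2" using abc(1) by auto
  then show ?thesis using four_cocircular[OF gp _ _ A(2) B(2) _ B(3)] A(1) B(1) SP by blast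
qed

lemma generic_dir:
  assumes "finite S"
  shows "\<exists>u. \<forall>x\<in>S. \<forall>y\<in>S. x \<noteq> y \<longrightarrow> cross u (x - y) \<noteq> 0"
proof -
  define M where "M = (\<lambda>(x,y). snd (x - y) / fst (x - y)) ` (S \<times> S)"
  have "finite M" unfolding M_def using assms by simp
  then obtain m where m: "m \<notin> M" using ex_new_if_finite[OF infinite_UNIV_char_0] by blast
  have "cross (1, m) (x - y) \<noteq> 0" if "x \<in> S" "y \<in> S" "x \<noteq> y" for x y
  proof
    assume h: "cross (1, m) (x - y) = 0"
    show False
    proof (cases "fst (x - y) = 0")
      case True
      then have "snd (x - y) = 0" using h unfolding cross_def by simp
      with True have "x - y = 0" by (simp add: prod_eq_iff)
      with that show False by simp
    next
      case False
      then have "m = snd (x - y) / fst (x - y)" using h unfolding cross_def by (simp add: field_simps)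
      then have "m \<in> M" unfolding M_def using that by force
      with m show False by simp
    qed
  qed
  then show ?thesis by blast
qed

lemma card_DT:
  assumes gp: "general_position P" and SP: "S \<subseteq> P" and fin: "finite S"
  shows "card (delaunay_triangles S) \<le> 2 * card S"
proof -
  obtain u where u: "\<And>x y. x \<in> S \<Longrightarrow> y \<in> S \<Longrightarrow> x \<noteq> y \<Longrightarrow> cross u (x - y) \<noteq> 0"
    using generic_dir[OF fin] by blast
  define D where "D = delaunay_triangles S"
  have finD: "finite D" unfolding D_def delaunay_triangles_def
    by (rule finite_subset[of _ "Pow S"]) (use fin in auto)
  define A where "A = {(\<sigma>, v). \<sigma> \<in> D \<and> v \<in> S \<and> cone_at \<sigma> v u}"
  define B where "B = {(\<sigma>, v). \<sigma> \<in> D \<and> v \<in> S \<and> cone_at \<sigma> v (-u)}"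
  have finA: "finite A" unfolding A_def
    by (rule finite_subset[of _ "D \<times> S"]) (use finD fin in auto)
  have finB: "finite B" unfolding B_def
    by (rule finite_subset[of _ "D \<times> S"]) (use finD fin in auto)
  have cA: "card A \<le> card S"
  proof (rule card_inj_on_le[of snd])
    have mem: "x \<in> A \<longleftrightarrow> fst x \<in> D \<and> snd x \<in> S \<and> cone_at (fst x) (snd x) u" for x
      unfolding A_def by (simp add: case_prod_beta)
    show "inj_on snd A"
    proof (rule inj_onI)
      fix x y assume "x \<in> A" "y \<in> A" "snd x = snd y"
      then have "fst x = fst y" using cone_unique[OF gp SP, of "fst x" "fst y" "snd x" "u"]
        unfolding mem D_def by auto
      then show "x = y" using \<open>snd x = snd y\<close> by (simp add: prod_eq_iff)
    qed
  qed (use fin in \<open>auto simp: A_def\<close>)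
  have cB: "card B \<le> card S"
  proof (rule card_inj_on_le[of snd])
    have mem: "x \<in> B \<longleftrightarrow> fst x \<in> D \<and> snd x \<in> S \<and> cone_at (fst x) (snd x) (-u)" for x
      unfolding B_def by (simp add: case_prod_beta)
    show "inj_on snd B"
    proof (rule inj_onI)
      fix x y assume "x \<in> B" "y \<in> B" "snd x = snd y"
      then have "fst x = fst y" using cone_unique[OF gp SP, of "fst x" "fst y" "snd x" "(-u)"]
        unfolding mem D_def by auto
      then show "x = y" using \<open>snd x = snd y\<close> by (simp add: prod_eq_iff)
    qed
  qed (use fin in \<open>auto simp: B_def\<close>)
  have "D \<subseteq> fst ` (A \<union> B)"
  proof
    fix \<sigma> assume s: "\<sigma> \<in> D"
    then have h: "\<sigma> \<subseteq> S" "card \<sigma> = 3" "\<not> collinear \<sigma>"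
      unfolding D_def delaunay_triangles_def by auto
    obtain a b c where abc: "\<sigma> = {a,b,c}" "a \<noteq> b" "b \<noteq> c" "a \<noteq> c"
      using h(2) card_3_iff by metis
    have inS: "a \<in> S" "b \<in> S" "c \<in> S" using h(1) abc(1) by auto
    have g1: "cross u (c - a) \<noteq> 0" using u inS abc by auto
    have "cross u (b - a) \<noteq> 0" using u inS abc by auto
    then have g2: "cross (b - a) u \<noteq> 0" unfolding cross_def by (auto simp: algebra_simps)
    have g3: "cross u (c - b) \<noteq> 0" using u inS abc by auto
    obtain v where v: "v \<in> \<sigma>" "cone_at \<sigma> v u \<or> cone_at \<sigma> v (-u)"
      using cone_exists[OF _ g1 g2 g3] h(3) abc(1) by blast
    then have "(\<sigma>, v) \<in> A \<union> B" using s h(1) unfolding A_def B_def by auto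
    then show "\<sigma> \<in> fst ` (A \<union> B)" by force
  qed
  then have "card D \<le> card (fst ` (A \<union> B))" using card_mono[of "fst ` (A \<union> B)" D] finA finB by auto
  also have "\<dots> \<le> card (A \<union> B)" by (rule card_image_le) (use finA finB in auto)
  also have "\<dots> \<le> card A + card B" by (rule card_Un_le)
  finally show ?thesis using cA cB unfolding D_def by simp
qed




definition W :: "point set \<Rightarrow> point set \<Rightarrow> point \<Rightarrow> nat" where
  "W P S v = (\<Sum>\<sigma>\<in>{\<sigma> \<in> delaunay_triangles S. v \<in> \<sigma>}. ell P \<sigma>)"

lemma finite_DT: "finite S \<Longrightarrow> finite (delaunay_triangles S)"
  unfolding delaunay_triangles_def by (rule finite_subset[of _ "Pow S"]) auto

lemma sum_ell:
  assumes gp: "general_position P" and finP: "finite P" and SP: "S \<subseteq> P"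
  shows "(\<Sum>\<sigma>\<in>delaunay_triangles S. ell P \<sigma>) \<le> 6 * card S + card P"
proof -
  define D where "D = delaunay_triangles S"
  have finS: "finite S" using finP SP finite_subset by blast
  have finD: "finite D" unfolding D_def using finite_DT[OF finS] .
  define m where "m \<sigma> = card {p \<in> P. p \<notin> \<sigma> \<and> p \<in> convex hull \<sigma>}" for \<sigma>
  have le: "ell P \<sigma> \<le> 3 + m \<sigma>" if "\<sigma> \<in> D" for \<sigma>
  proof -
    have c3: "card \<sigma> = 3" using that unfolding D_def delaunay_triangles_def by auto
    have "{p \<in> P. p \<in> convex hull \<sigma>} \<subseteq> \<sigma> \<union> {p \<in> P. p \<notin> \<sigma> \<and> p \<in> convex hull \<sigma>}" by auto
    then have "ell P \<sigma> \<le> card (\<sigma> \<union> {p \<in> P. p \<notin> \<sigma> \<and> p \<in> convex hull \<sigma>})"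
      unfolding ell_def using c3 finP by (intro card_mono) (auto intro: card_ge_0_finite)
    also have "\<dots> \<le> card \<sigma> + m \<sigma>" unfolding m_def by (rule card_Un_le)
    finally show ?thesis using c3 by simp
  qed
  have sm: "(\<Sum>\<sigma>\<in>D. m \<sigma>) \<le> card P"
  proof -
    have "(\<Sum>\<sigma>\<in>D. m \<sigma>) = (\<Sum>\<sigma>\<in>D. \<Sum>p\<in>{p \<in> P. p \<notin> \<sigma> \<and> p \<in> convex hull \<sigma>}. (1::nat))"
      unfolding m_def by simp
    also have "\<dots> = (\<Sum>p\<in>P. \<Sum>\<sigma>\<in>{\<sigma> \<in> D. p \<notin> \<sigma> \<and> p \<in> convex hull \<sigma>}. (1::nat))"
      by (rule sum.swap_restrict[OF finD finP])
    also have "\<dots> \<le> (\<Sum>p\<in>P. (1::nat))"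
    proof (rule sum_mono)
      fix p assume pP: "p \<in> P"
      have "card {\<sigma> \<in> D. p \<notin> \<sigma> \<and> p \<in> convex hull \<sigma>} \<le> Suc 0"
        using finD interior_unique[OF gp SP pP] unfolding D_def
        by (subst card_le_Suc0_iff_eq) auto
      then show "(\<Sum>\<sigma>\<in>{\<sigma> \<in> D. p \<notin> \<sigma> \<and> p \<in> convex hull \<sigma>}. (1::nat)) \<le> 1" by simp
    qed
    finally show ?thesis by simp
  qed
  have "(\<Sum>\<sigma>\<in>D. ell P \<sigma>) \<le> (\<Sum>\<sigma>\<in>D. 3 + m \<sigma>)" by (rule sum_mono) (rule le)
  also have "\<dots> = 3 * card D + (\<Sum>\<sigma>\<in>D. m \<sigma>)" by (simp add: sum.distrib)
  also have "\<dots> \<le> 3 * (2 * card S) + card P"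
    using card_DT[OF gp SP finS] sm unfolding D_def by linarith
  finally show ?thesis unfolding D_def by simp
qed

lemma sum_W:
  assumes gp: "general_position P" and finP: "finite P" and SP: "S \<subseteq> P"
  shows "(\<Sum>v\<in>S. W P S v) \<le> 21 * card P"
proof -
  define D where "D = delaunay_triangles S"
  have finS: "finite S" using finP SP finite_subset by blast
  have finD: "finite D" unfolding D_def using finite_DT[OF finS] .
  have kn: "card S \<le> card P" using card_mono[OF finP SP] .
  have "(\<Sum>v\<in>S. W P S v) = (\<Sum>v\<in>S. \<Sum>\<sigma>\<in>{\<sigma> \<in> D. v \<in> \<sigma>}. ell P \<sigma>)"
    unfolding W_def D_def by simp
  also have "\<dots> = (\<Sum>\<sigma>\<in>D. \<Sum>v\<in>{v \<in> S. v \<in> \<sigma>}. ell P \<sigma>)"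
    by (rule sum.swap_restrict[OF finS finD])
  also have "\<dots> = (\<Sum>\<sigma>\<in>D. 3 * ell P \<sigma>)"
  proof (rule sum.cong[OF refl])
    fix \<sigma> assume "\<sigma> \<in> D"
    then have "{v \<in> S. v \<in> \<sigma>} = \<sigma>" "card \<sigma> = 3"
      unfolding D_def delaunay_triangles_def by auto
    then show "(\<Sum>v\<in>{v \<in> S. v \<in> \<sigma>}. ell P \<sigma>) = 3 * ell P \<sigma>" by simp
  qed
  also have "\<dots> = 3 * (\<Sum>\<sigma>\<in>D. ell P \<sigma>)" by (simp add: sum_distrib_left)
  also have "\<dots> \<le> 3 * (6 * card S + card P)"
    using sum_ell[OF gp finP SP] unfolding D_def by simp
  also have "\<dots> \<le> 21 * card P" using kn by simp
  finally show ?thesis .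
qed

lemma sum_sq_le:
  fixes f :: "'a \<Rightarrow> nat"
  assumes "finite A"
  shows "(\<Sum>x\<in>A. real (f x) ^ 2) \<le> real (\<Sum>x\<in>A. f x) ^ 2"
proof -
  define M where "M = real (\<Sum>x\<in>A. f x)"
  have "(\<Sum>x\<in>A. real (f x) ^ 2) \<le> (\<Sum>x\<in>A. real (f x) * M)"
  proof (rule sum_mono)
    fix x assume "x \<in> A"
    then have "f x \<le> (\<Sum>x\<in>A. f x)" using assms by (intro member_le_sum) auto
    then have "real (f x) \<le> M" unfolding M_def by (simp only: of_nat_le_iff)
    then show "real (f x) ^ 2 \<le> real (f x) * M" by (simp add: power2_eq_square mult_left_mono)
  qed
  also have "\<dots> = M * M" unfolding M_def by (simp add: sum_distrib_right[symmetric] mult.commute)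
  finally show ?thesis unfolding M_def by (simp add: power2_eq_square)
qed

lemma sum_W_sq:
  assumes gp: "general_position P" and finP: "finite P" and SP: "S \<subseteq> P"
  shows "(\<Sum>v\<in>S. real (W P S v) ^ 2) \<le> 441 * real (card P) ^ 2"
proof -
  have finS: "finite S" using finP SP finite_subset by blast
  have "(\<Sum>v\<in>S. real (W P S v) ^ 2) \<le> real (\<Sum>v\<in>S. W P S v) ^ 2" by (rule sum_sq_le[OF finS])
  also have "\<dots> \<le> real (21 * card P) ^ 2"
  proof (rule power_mono)
    show "real (\<Sum>v\<in>S. W P S v) \<le> real (21 * card P)"
      using sum_W[OF gp finP SP] by (simp only: of_nat_le_iff)
  qed (simp only: of_nat_0_le_iff)
  also have "\<dots> = 441 * real (card P) ^ 2" by (simp add: power2_eq_square)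
  finally show ?thesis .
qed




lemma rotate_inj_same:
  assumes "rotate n xs = rotate n ys" "length xs = length ys"
  shows "xs = ys"
proof -
  define L where "L = length xs"
  have "rotate ((L - 1) * n) (rotate n xs) = rotate (L * n) xs"
  proof (cases L)
    case 0 then show ?thesis unfolding L_def by simp
  next
    case (Suc m) then show ?thesis by (simp add: rotate_rotate algebra_simps)
  qed
  also have "\<dots> = xs" by (rule rotate_id) (simp add: L_def)
  finally have x: "rotate ((L - 1) * n) (rotate n xs) = xs" .
  have "rotate ((L - 1) * n) (rotate n ys) = rotate (L * n) ys"
  proof (cases L)
    case 0 then show ?thesis unfolding L_def using assms(2) by simp
  next
    case (Suc m) then show ?thesis by (simp add: rotate_rotate algebra_simps)
  qed
  also have "\<dots> = ys" by (rule rotate_id) (simp add: L_def assms(2))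
  finally have y: "rotate ((L - 1) * n) (rotate n ys) = ys" .
  show ?thesis using x y assms(1) by metis
qed

definition Rot :: "nat \<Rightarrow> nat \<Rightarrow> 'a list \<Rightarrow> 'a list" where
  "Rot k j ps = rotate (Suc j) (take k ps) @ drop k ps"

lemma Rot_perm:
  assumes "ps \<in> permutations_of_set A"
  shows "Rot k j ps \<in> permutations_of_set A"
proof -
  have "set (Rot k j ps) = set (take k ps @ drop k ps)" unfolding Rot_def set_append set_rotate ..
  then have 1: "set (Rot k j ps) = set ps" by (simp only: append_take_drop_id)
  have "distinct (Rot k j ps) = distinct (take k ps @ drop k ps)"
    unfolding Rot_def distinct_append distinct_rotate set_rotate ..
  then have 2: "distinct (Rot k j ps) = distinct ps" by (simp only: append_take_drop_id)
  show ?thesis using 1 2 assms unfolding permutations_of_set_def by simp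
qed

lemma Rot_take:
  assumes "k \<le> length ps"
  shows "take k (Rot k j ps) = rotate (Suc j) (take k ps)"
  using assms unfolding Rot_def by simp

lemma Rot_inj:
  assumes "k \<le> card A"
  shows "inj_on (Rot k j) (permutations_of_set A)"
proof (rule inj_onI)
  fix x y assume x: "x \<in> permutations_of_set A" and y: "y \<in> permutations_of_set A"
    and e: "Rot k j x = Rot k j y"
  have lx: "length x = card A" using x unfolding permutations_of_set_def by (auto simp: distinct_card)
  have ly: "length y = card A" using y unfolding permutations_of_set_def by (auto simp: distinct_card)
  have tx: "take k (Rot k j x) = rotate (Suc j) (take k x)" by (rule Rot_take) (simp add: lx assms)
  have ty: "take k (Rot k j y) = rotate (Suc j) (take k y)" by (rule Rot_take) (simp add: ly assms)
  have "rotate (Suc j) (take k x) = rotate (Suc j) (take k y)"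
    using tx ty e by simp
  then have t: "take k x = take k y" by (rule rotate_inj_same) (simp add: lx ly)
  have "drop k (Rot k j x) = drop k x" "drop k (Rot k j y) = drop k y"
    unfolding Rot_def using lx ly assms by simp_all
  then have d: "drop k x = drop k y" using e by simp
  have "x = take k x @ drop k x" by (rule append_take_drop_id[symmetric])
  also have "\<dots> = take k y @ drop k y" using t d by (rule arg_cong2[where f="(@)"])
  also have "\<dots> = y" by (rule append_take_drop_id)
  finally show "x = y" .
qed

lemma Rot_image:
  assumes "finite A" "k \<le> card A"
  shows "Rot k j ` permutations_of_set A = permutations_of_set A"
proof (rule endo_inj_surj)
  show "finite (permutations_of_set A)" using assms(1) by simp
  show "Rot k j ` permutations_of_set A \<subseteq> permutations_of_set A" using Rot_perm by blast
  show "inj_on (Rot k j) (permutations_of_set A)" by (rule Rot_inj[OF assms(2)])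
qed

lemma Rot_nth:
  assumes "j < k" "k \<le> length ps"
  shows "Rot k j ps ! (k - 1) = ps ! j"
proof -
  have lt: "k - 1 < length (rotate (Suc j) (take k ps))" using assms by simp
  have "Rot k j ps ! (k - 1) = rotate (Suc j) (take k ps) ! (k - 1)"
    unfolding Rot_def using lt by (simp add: nth_append)
  also have "\<dots> = take k ps ! ((Suc j + (k - 1)) mod length (take k ps))"
    by (rule nth_rotate) (use lt in simp)
  also have "length (take k ps) = k" using assms by simp
  also have "(Suc j + (k - 1)) mod k = j" using assms by simp
  also have "take k ps ! j = ps ! j" using assms by simp
  finally show ?thesis .
qed

lemma perm_avg:
  fixes f :: "'a set \<Rightarrow> 'a \<Rightarrow> real"
  assumes finA: "finite A" and k1: "1 \<le> k" and kA: "k \<le> card A"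
  shows "real k * (\<Sum>ps\<in>permutations_of_set A. f (set (take k ps)) (ps ! (k - 1)))
       = (\<Sum>ps\<in>permutations_of_set A. \<Sum>w\<in>set (take k ps). f (set (take k ps)) w)"
proof -
  define PP where "PP = permutations_of_set A"
  define g where "g ps = f (set (take k ps)) (ps ! (k - 1))" for ps
  have len: "length ps = card A" if "ps \<in> PP" for ps
    using that unfolding PP_def permutations_of_set_def by (auto simp: distinct_card)
  have rot: "(\<Sum>ps\<in>PP. g ps) = (\<Sum>ps\<in>PP. f (set (take k ps)) (ps ! j))" if j: "j < k" for j
  proof -
    have "(\<Sum>ps\<in>PP. g ps) = (\<Sum>ps\<in>Rot k j ` PP. g ps)" unfolding PP_def Rot_image[OF finA kA] ..
    also have "\<dots> = (\<Sum>ps\<in>PP. g (Rot k j ps))"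
      by (rule sum.reindex[unfolded comp_def]) (use Rot_inj[OF kA] PP_def in simp)
    also have "\<dots> = (\<Sum>ps\<in>PP. f (set (take k ps)) (ps ! j))"
    proof (rule sum.cong[OF refl])
      fix ps assume "ps \<in> PP"
      then have l: "k \<le> length ps" using len kA by simp
      have "set (take k (Rot k j ps)) = set (take k ps)" using Rot_take[OF l] by simp
      then show "g (Rot k j ps) = f (set (take k ps)) (ps ! j)"
        unfolding g_def using Rot_nth[OF j l] by simp
    qed
    finally show ?thesis .
  qed
  have "real k * (\<Sum>ps\<in>PP. g ps) = (\<Sum>j<k. \<Sum>ps\<in>PP. g ps)" by simp
  also have "\<dots> = (\<Sum>j<k. \<Sum>ps\<in>PP. f (set (take k ps)) (ps ! j))"
    by (rule sum.cong[OF refl]) (use rot in simp)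
  also have "\<dots> = (\<Sum>ps\<in>PP. \<Sum>j<k. f (set (take k ps)) (ps ! j))" by (rule sum.swap)
  also have "\<dots> = (\<Sum>ps\<in>PP. \<Sum>w\<in>set (take k ps). f (set (take k ps)) w)"
  proof (rule sum.cong[OF refl])
    fix ps assume ps: "ps \<in> PP"
    then have l: "k \<le> length ps" using len kA by simp
    have d: "distinct ps" using ps unfolding PP_def permutations_of_set_def by simp
    have img: "(!) ps ` {..<k} = set (take k ps)" using nth_image[OF l] by (simp add: lessThan_atLeast0)
    have inj: "inj_on ((!) ps) {..<k}"
      using d l by (auto simp: inj_on_def nth_eq_iff_index_eq)
    show "(\<Sum>j<k. f (set (take k ps)) (ps ! j)) = (\<Sum>w\<in>set (take k ps). f (set (take k ps)) w)"
      unfolding img[symmetric] by (rule sum.reindex[OF inj, unfolded comp_def, symmetric])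
  qed
  finally show ?thesis unfolding PP_def g_def .
qed

lemma stage_work_W: "stage_work P ps k = W P (set (take k ps)) (ps ! (k - 1))"
  unfolding stage_work_def W_def ..

lemma part1:
  assumes finP: "finite P" and gp: "general_position P" and k1: "1 \<le> k" and kP: "k \<le> card P"
  shows "expected_sq_work P k \<le> 441 * real (card P) ^ 2 / real k"
proof -
  define PP where "PP = permutations_of_set P"
  define N where "N = 441 * real (card P) ^ 2"
  define X where "X = (\<Sum>ps\<in>PP. real (stage_work P ps k) ^ 2)"
  define c where "c = real (card PP)"
  have cpos: "c > 0" unfolding c_def PP_def using finP by simp
  have k0: "real k > 0" using k1 by simp
  have pa: "real k * (\<Sum>ps\<in>PP. real (W P (set (take k ps)) (ps ! (k - 1))) ^ 2)
      = (\<Sum>ps\<in>PP. \<Sum>w\<in>set (take k ps). real (W P (set (take k ps)) w) ^ 2)"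
    using perm_avg[OF finP k1 kP, of "\<lambda>S w. real (W P S w) ^ 2"] by (simp only: PP_def)
  have "real k * X = (\<Sum>ps\<in>PP. \<Sum>w\<in>set (take k ps). real (W P (set (take k ps)) w) ^ 2)"
    unfolding X_def stage_work_W by (rule pa)
  also have "\<dots> \<le> (\<Sum>ps\<in>PP. N)"
  proof (rule sum_mono)
    fix ps assume "ps \<in> PP"
    then have sp: "set ps = P" unfolding PP_def permutations_of_set_def by simp
    have "set (take k ps) \<subseteq> set ps" by (rule set_take_subset)
    then have "set (take k ps) \<subseteq> P" unfolding sp .
    then show "(\<Sum>w\<in>set (take k ps). real (W P (set (take k ps)) w) ^ 2) \<le> N"
      unfolding N_def by (rule sum_W_sq[OF gp finP])
  qed
  also have "\<dots> = c * N" unfolding c_def by simp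
  finally have h: "real k * X \<le> c * N" .
  have "X \<le> N * c / real k"
    unfolding pos_le_divide_eq[OF k0] using h by (simp add: ac_simps)
  then have "X / c \<le> N / real k"
    using cpos by (simp add: pos_divide_le_eq)
  moreover have "expected_sq_work P k = X / c"
    unfolding expected_sq_work_def X_def c_def PP_def ..
  ultimately show ?thesis unfolding N_def by simp
qed

lemma harm_le_ln: "n \<ge> 1 \<Longrightarrow> (harm n :: real) \<le> 1 + ln (real n)"
proof -
  assume "n \<ge> 1"
  then obtain m where m: "n = Suc m" by (cases n) auto
  have "harm (Suc m) - ln (real (Suc m)) \<le> harm (Suc 0) - ln (real (Suc 0))"
    using decseqD[OF decseq_harm_diff_ln, of 0 m] by simp
  also have "\<dots> = 1" by (simp add: harm_def)
  finally show ?thesis using m by simp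
qed

lemma part2:
  assumes finP: "finite P" and gp: "general_position P" and n2: "2 \<le> card P"
  shows "(\<Sum>k=1..card P. expected_sq_work P k) \<le> 1323 * real (card P) ^ 2 * ln (real (card P))"
proof -
  define n where "n = card P"
  have "(\<Sum>k=1..n. expected_sq_work P k) \<le> (\<Sum>k=1..n. 441 * real n ^ 2 / real k)"
    by (rule sum_mono) (use part1[OF finP gp] n_def in auto)
  also have "\<dots> = 441 * real n ^ 2 * harm n"
    by (simp add: harm_def sum_distrib_left divide_inverse)
  also have "\<dots> \<le> 441 * real n ^ 2 * (1 + ln (real n))"
    using harm_le_ln[of n] n2 unfolding n_def by (intro mult_left_mono) auto
  also have "\<dots> \<le> 441 * real n ^ 2 * (3 * ln (real n))"
  proof (intro mult_left_mono)
    have "ln 2 \<le> ln (real n)" using n2 unfolding n_def by simp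
    then have "2/3 \<le> ln (real n)" using ln2_ge_two_thirds by linarith
    then show "1 + ln (real n) \<le> 3 * ln (real n)" by linarith
  qed simp
  also have "\<dots> = 1323 * real n ^ 2 * ln (real n)" by simp
  finally have "(\<Sum>k=1..n. expected_sq_work P k) \<le> 1323 * real n ^ 2 * ln (real n)" .
  then show ?thesis unfolding n_def .
qed

theorem mainTheorem6:
  shows "(\<exists>C::real. \<forall>P k. finite P \<longrightarrow> general_position P \<longrightarrow> 1 \<le> k \<longrightarrow> k \<le> card P \<longrightarrow>
            expected_sq_work P k \<le> C * real (card P) ^ 2 / real k)
       \<and> (\<exists>C::real. \<forall>P. finite P \<longrightarrow> general_position P \<longrightarrow> 2 \<le> card P \<longrightarrow>
            (\<Sum>k=1..card P. expected_sq_work P k) \<le> C * real (card P) ^ 2 * ln (real (card P)))"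
proof (intro conjI)
  show "\<exists>C::real. \<forall>P k. finite P \<longrightarrow> general_position P \<longrightarrow> 1 \<le> k \<longrightarrow> k \<le> card P \<longrightarrow>
            expected_sq_work P k \<le> C * real (card P) ^ 2 / real k"
    by (rule exI[of _ 441]) (intro allI impI, rule part1)
  show "\<exists>C::real. \<forall>P. finite P \<longrightarrow> general_position P \<longrightarrow> 2 \<le> card P \<longrightarrow>
            (\<Sum>k=1..card P. expected_sq_work P k) \<le> C * real (card P) ^ 2 * ln (real (card P))"
    by (rule exI[of _ 1323]) (intro allI impI, rule part2)
qed


end
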